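(* For any positive integer $n$, \[ \sum_{\sum_i i y_{k,i}=n}\binom{\sum_i y_{k,i}}{y_{k,1},\ldots,y_{k,n}}(-1)^{\sum_i y_{k,i}}\prod_{i=1}^{n}\left[\binom{n}{i}\right]^{y_{k,i}}=(-1)^n\binom{2n-1}{n-1}. \]
   Context: The sum runs over all partitions of $n$, each represented as a tuple $(y_{k,1},\ldots,y_{k,n})$ of non-negative integers with $\sum_{i=1}^n i\,y_{k,i}=n$; sums $\sum_i$ run over $i=1,\ldots,n$. $\binom{N}{a_1,\ldots,a_n}=\frac{N!}{a_1!\cdots a_n!}$ is the multinomial coefficient. *)

theory Defs
  imports Main
begin

text \<open>Partitions of n as multiplicity tuples (y_1,...,y_n): functions nat => nat
  supported on {1..n} with sum of i * y i over i = 1..n equal to n.\<close>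
definition partitions_tuples :: "nat \<Rightarrow> (nat \<Rightarrow> nat) set" where
  "partitions_tuples n = {y. (\<forall>i. i \<notin> {1..n} \<longrightarrow> y i = 0) \<and> (\<Sum>i=1..n. i * y i) = n}"

definition multinomial :: "nat \<Rightarrow> (nat \<Rightarrow> nat) \<Rightarrow> nat" where
  "multinomial n a = fact (\<Sum>i=1..n. a i) div (\<Prod>i=1..n. fact (a i))"

end

theory Submission imports Defs "HOL-Combinatorics.Multiset_Permutations" "HOL-Computational_Algebra.Formal_Power_Series" begin

definition Ls :: "nat \<Rightarrow> nat \<Rightarrow> nat list set" where
  "Ls n m = {xs. set xs \<subseteq> {1..n} \<and> sum_list xs = m}"

lemma len_le_sum: "set xs \<subseteq> {1..(n::nat)} \<Longrightarrow> length xs \<le> sum_list xs"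
  by (induction xs) auto

lemma Ls_finite: "finite (Ls n m)"
proof (rule finite_subset)
  show "Ls n m \<subseteq> {xs. set xs \<subseteq> {1..n} \<and> length xs \<le> m}"
  proof
    fix xs assume "xs \<in> Ls n m"
    hence "set xs \<subseteq> {1..n}" "sum_list xs = m" by (auto simp: Ls_def)
    moreover have "length xs \<le> sum_list xs" using calculation(1) by (rule len_le_sum)
    ultimately show "xs \<in> {xs. set xs \<subseteq> {1..n} \<and> length xs \<le> m}" by simp
  qed
  show "finite {xs. set xs \<subseteq> {1..n} \<and> length xs \<le> m}"
    by (rule finite_lists_length_le) simp
qed

lemma Ls_0: "Ls n 0 = {[]}"
proof
  show "Ls n 0 \<subseteq> {[]}"
  proof
    fix xs assume "xs \<in> Ls n 0"
    hence a: "set xs \<subseteq> {1..n}" and b: "sum_list xs = 0" by (auto simp: Ls_def)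
    have "length xs \<le> sum_list xs" using a by (rule len_le_sum)
    with b have "length xs = 0" by linarith
    thus "xs \<in> {[]}" by simp
  qed
  show "{[]} \<subseteq> Ls n 0" by (simp add: Ls_def)
qed

lemma Ls_pos: "m > 0 \<Longrightarrow> Ls n m = (\<Union>i\<in>{i. 1\<le>i \<and> i\<le>n \<and> i\<le>m}. (#) i ` Ls n (m-i))"
  unfolding Ls_def
  apply (rule set_eqI)
  subgoal for xs by (cases xs) auto
  done

definition L :: "nat \<Rightarrow> nat \<Rightarrow> int" where
  "L n m = (\<Sum>xs\<in>Ls n m. prod_list (map (\<lambda>i. - int (n choose i)) xs))"

lemma L_0: "L n 0 = 1" by (simp add: L_def Ls_0)

lemma L_pos: assumes "m > 0"
  shows "L n m = (\<Sum>i\<in>{i. 1\<le>i \<and> i\<le>n \<and> i\<le>m}. - int (n choose i) * L n (m-i))"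
proof -
  have "L n m = (\<Sum>i\<in>{i. 1\<le>i \<and> i\<le>n \<and> i\<le>m}. \<Sum>xs\<in>(#) i ` Ls n (m-i). prod_list (map (\<lambda>i. - int (n choose i)) xs))"
    unfolding L_def Ls_pos[OF assms]
    by (rule sum.UNION_disjoint) (auto simp: Ls_finite)
  also have "\<dots> = (\<Sum>i\<in>{i. 1\<le>i \<and> i\<le>n \<and> i\<le>m}. - int (n choose i) * L n (m-i))"
    by (rule sum.cong) (auto simp: sum.reindex L_def sum_distrib_left)
  finally show ?thesis .
qed

lemma L_val: "m \<le> n \<Longrightarrow> real_of_int (L n m) = (- real n) gchoose m"
proof (induction m rule: less_induct)
  case (less m)
  show ?case
  proof (cases "m = 0")
    case True then show ?thesis by (simp add: L_0)
  next
    case False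
    have V: "(\<Sum>k\<in>{0..m}. (real n gchoose k) * ((- real n) gchoose (m - k))) = 0"
      using gbinomial_Vandermonde[of "real n" "- real n" m] False by (cases m) simp_all
    have "(\<Sum>k\<in>{0..m}. (real n gchoose k) * ((- real n) gchoose (m - k)))
        = ((- real n) gchoose m) + (\<Sum>k\<in>{1..m}. (real n gchoose k) * ((- real n) gchoose (m - k)))"
      by (simp add: sum.atLeast_Suc_atMost)
    also have "{i. 1\<le>i \<and> i\<le>n \<and> i\<le>m} = {1..m}" using less.prems by auto
    hence "(\<Sum>k\<in>{1..m}. (real n gchoose k) * ((- real n) gchoose (m - k))) = - real_of_int (L n m)"
      using L_pos[of m n] False less.IH less.prems
      by (auto simp: binomial_gbinomial[symmetric] sum_negf intro!: sum.cong)
    finally show ?thesis using V by simp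
  qed
qed

lemma prod_list_count: "set xs \<subseteq> X \<Longrightarrow> finite X \<Longrightarrow>
   prod_list (map f xs) = (\<Prod>x\<in>X. f x ^ count_list xs x)"
proof (induction xs)
  case Nil then show ?case by simp
next
  case (Cons a xs)
  have "prod_list (map f (a # xs)) = f a * (\<Prod>x\<in>X. f x ^ count_list xs x)" using Cons by simp
  also have "\<dots> = (\<Prod>x\<in>X. f x ^ count_list (a # xs) x)"
  proof -
    have "(\<Prod>x\<in>X. f x ^ count_list (a # xs) x) = (\<Prod>x\<in>X. (if x = a then f x else 1) * f x ^ count_list xs x)"
      by (rule prod.cong) auto
    also have "\<dots> = (\<Prod>x\<in>X. (if x = a then f x else 1)) * (\<Prod>x\<in>X. f x ^ count_list xs x)"
      by (rule prod.distrib)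
    also have "(\<Prod>x\<in>X. (if x = a then f x else 1)) = f a" using Cons.prems
      by (simp add: prod.delta)
    finally show ?thesis by simp
  qed
  finally show ?case .
qed

lemma sum_count: "set xs \<subseteq> {1..n} \<Longrightarrow> sum_list xs = (\<Sum>i=1..n. i * count_list xs i)"
  using sum_list_map_eq_sum_count2[of xs "{1..n}" id] by (simp add: mult.commute)

definition Am :: "nat \<Rightarrow> (nat \<Rightarrow> nat) \<Rightarrow> nat multiset" where
  "Am n y = (\<Sum>i\<in>{1..n}. replicate_mset (y i) i)"

lemma count_Am: "y \<in> partitions_tuples n \<Longrightarrow> count (Am n y) = y"
proof
  fix x assume y: "y \<in> partitions_tuples n"
  have "count (Am n y) x = (\<Sum>i\<in>{1..n}. if i = x then y i else 0)"
    unfolding Am_def count_sum by (rule sum.cong) auto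
  also have "\<dots> = y x" using y by (auto simp: partitions_tuples_def)
  finally show "count (Am n y) x = y x" .
qed

lemma P_image: "partitions_tuples n = count_list ` Ls n n"
proof
  show "partitions_tuples n \<subseteq> count_list ` Ls n n"
  proof
    fix y assume y: "y \<in> partitions_tuples n"
    obtain xs where xs: "mset xs = Am n y" using ex_mset by blast
    have cy: "count_list xs = y" using count_Am[OF y] xs by (metis count_mset ext)
    have "set xs \<subseteq> {1..n}"
    proof
      fix i assume "i \<in> set xs"
      hence "count_list xs i \<noteq> 0" by (simp add: count_list_0_iff)
      thus "i \<in> {1..n}" using y cy by (auto simp: partitions_tuples_def)
    qed
    moreover have "sum_list xs = n" using sum_count[OF calculation] y cy
      by (simp add: partitions_tuples_def)
    ultimately show "y \<in> count_list ` Ls n n" using cy unfolding Ls_def by blast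
  qed
  show "count_list ` Ls n n \<subseteq> partitions_tuples n"
  proof
    fix y assume "y \<in> count_list ` Ls n n"
    then obtain xs where xs: "xs \<in> Ls n n" "y = count_list xs" by blast
    hence s: "set xs \<subseteq> {1..n}" "sum_list xs = n" by (auto simp: Ls_def)
    have "\<forall>i. i \<notin> {1..n} \<longrightarrow> y i = 0" using s xs by (auto simp: count_list_0_iff)
    moreover have "(\<Sum>i=1..n. i * y i) = n" using sum_count[OF s(1)] s xs by simp
    ultimately show "y \<in> partitions_tuples n" by (simp add: partitions_tuples_def)
  qed
qed

lemma count_in_Ls: assumes y: "y \<in> partitions_tuples n" and cy: "count_list xs = y"
  shows "xs \<in> Ls n n"
proof -
  have "set xs \<subseteq> {1..n}"
  proof
    fix i assume "i \<in> set xs"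
    hence "count_list xs i \<noteq> 0" by (simp add: count_list_0_iff)
    thus "i \<in> {1..n}" using y cy by (auto simp: partitions_tuples_def)
  qed
  moreover have "sum_list xs = n" using sum_count[OF calculation] y cy
    by (simp add: partitions_tuples_def)
  ultimately show ?thesis unfolding Ls_def by blast
qed

lemma fiber: assumes y: "y \<in> partitions_tuples n"
  shows "{xs \<in> Ls n n. count_list xs = y} = permutations_of_multiset (Am n y)"
proof -
  have "mset xs = Am n y \<longleftrightarrow> count_list xs = y" for xs
    using count_Am[OF y] by (metis count_mset ext multiset_eqI)
  then show ?thesis using count_in_Ls[OF y]
    by (auto simp: permutations_of_multiset_def)
qed

lemma multinomial_card: assumes y: "y \<in> partitions_tuples n"
  shows "multinomial n y = card (permutations_of_multiset (Am n y))"
proof -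
  have sz: "size (Am n y) = (\<Sum>i=1..n. y i)" by (simp add: Am_def)
  have ss: "set_mset (Am n y) \<subseteq> {1..n}"
  proof
    fix x assume "x \<in># Am n y"
    hence "count (Am n y) x \<noteq> 0" by simp
    hence "y x \<noteq> 0" using count_Am[OF y] by simp
    thus "x \<in> {1..n}" using y by (auto simp: partitions_tuples_def)
  qed
  have "(\<Prod>x\<in>set_mset (Am n y). fact (count (Am n y) x)) = (\<Prod>i=1..n. fact (count (Am n y) i) :: nat)"
    by (rule prod.mono_neutral_left) (use ss in \<open>auto simp: not_in_iff\<close>)
  then show ?thesis
    unfolding card_permutations_of_multiset(1) multinomial_def sz count_Am[OF y] by simp
qed

theorem corollary4p1:
  fixes n :: nat
  assumes "n \<ge> 1"
  shows "(\<Sum>y\<in>partitions_tuples n.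
            int (multinomial n y) * (-1) ^ (\<Sum>i=1..n. y i) * (\<Prod>i=1..n. int (n choose i) ^ y i))
         = (-1) ^ n * int ((2 * n - 1) choose (n - 1))"
proof -
  define b where "b = (\<lambda>i. - int (n choose i))"
  have tm: "int (multinomial n y) * (-1) ^ (\<Sum>i=1..n. y i) * (\<Prod>i=1..n. int (n choose i) ^ y i)
      = (\<Sum>xs\<in>{xs \<in> Ls n n. count_list xs = y}. prod_list (map b xs))"
    if y: "y \<in> partitions_tuples n" for y
  proof -
    have "(\<Sum>xs\<in>{xs \<in> Ls n n. count_list xs = y}. prod_list (map b xs))
        = (\<Sum>xs\<in>{xs \<in> Ls n n. count_list xs = y}. (\<Prod>i=1..n. b i ^ y i))"
    proof (rule sum.cong)
      fix xs assume "xs \<in> {xs \<in> Ls n n. count_list xs = y}"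
      hence "set xs \<subseteq> {1..n}" "count_list xs = y" by (auto simp: Ls_def)
      thus "prod_list (map b xs) = (\<Prod>i=1..n. b i ^ y i)"
        using prod_list_count[of xs "{1..n}" b] by simp
    qed simp
    also have "\<dots> = int (multinomial n y) * (\<Prod>i=1..n. b i ^ y i)"
    proof -
      have "card {xs \<in> Ls n n. count_list xs = y} = multinomial n y"
        unfolding fiber[OF y] multinomial_card[OF y] by (rule refl)
      then show ?thesis by (simp only: sum_constant of_nat_id)
    qed
    also have "(\<Prod>i=1..n. b i ^ y i) = (-1) ^ (\<Sum>i=1..n. y i) * (\<Prod>i=1..n. int (n choose i) ^ y i)"
    proof -
      have "(\<Prod>i=1..n. b i ^ y i) = (\<Prod>i=1..n. (-1) ^ y i * int (n choose i) ^ y i)"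
        unfolding b_def by (rule prod.cong) (rule refl, rule power_minus)
      also have "\<dots> = (\<Prod>i=1..n. (-1::int) ^ y i) * (\<Prod>i=1..n. int (n choose i) ^ y i)"
        by (rule prod.distrib)
      also have "(\<Prod>i=1..n. (-1::int) ^ y i) = (-1) ^ (\<Sum>i=1..n. y i)"
        by (rule power_sum[symmetric])
      finally show ?thesis .
    qed
    finally show ?thesis by (simp only: mult.assoc)
  qed
  have "(\<Sum>y\<in>partitions_tuples n.
            int (multinomial n y) * (-1) ^ (\<Sum>i=1..n. y i) * (\<Prod>i=1..n. int (n choose i) ^ y i))
      = (\<Sum>y\<in>partitions_tuples n. \<Sum>xs\<in>{xs \<in> Ls n n. count_list xs = y}. prod_list (map b xs))"
    by (rule sum.cong) (rule refl, rule tm)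
  also have "\<dots> = (\<Sum>y\<in>count_list ` Ls n n. \<Sum>xs\<in>{xs \<in> Ls n n. count_list xs = y}. prod_list (map b xs))"
    by (simp only: P_image)
  also have "\<dots> = L n n"
    unfolding L_def b_def by (rule sum.image_gen[symmetric]) (rule Ls_finite)
  finally have 1: "(\<Sum>y\<in>partitions_tuples n.
            int (multinomial n y) * (-1) ^ (\<Sum>i=1..n. y i) * (\<Prod>i=1..n. int (n choose i) ^ y i)) = L n n" .
  have "real_of_int (L n n) = (-1) ^ n * ((real n + real n - 1) gchoose n)"
  proof -
    have Lv: "real_of_int (L n n) = (- real n) gchoose n" by (rule L_val) simp
    show ?thesis using Lv gbinomial_minus[of "real n" n] by (rule trans)
  qed
  also have "real n + real n - 1 = real (2 * n - 1)" using assms by simp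
  also have "(real (2 * n - 1) gchoose n) = real ((2 * n - 1) choose n)"
    by (rule binomial_gbinomial[symmetric])
  also have "(2 * n - 1) choose n = (2 * n - 1) choose (n - 1)"
    using assms binomial_symmetric[of "n - 1" "2 * n - 1"] by simp
  finally have 2: "real_of_int (L n n) = (-1) ^ n * real ((2 * n - 1) choose (n - 1))" .
  have 3: "real_of_int ((-1) ^ n * int ((2 * n - 1) choose (n - 1))) = (-1) ^ n * real ((2 * n - 1) choose (n - 1))"
    by simp
  have "L n n = (-1) ^ n * int ((2 * n - 1) choose (n - 1))"
    using 2 3 by (simp only: of_int_eq_iff[symmetric])
  then show ?thesis using 1 by (rule trans[rotated])
qed

end
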